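(* Let $1 \le d \le D$ be integers and let $\mathcal{L} \subseteq \mathbb{R}^D$ be a $d$-dimensional affine subspace (viewed as an embedded submanifold of $\mathbb{R}^D$). Let $X$ be a random vector in $\mathbb{R}^D$ whose distribution is supported on $\mathcal{L}$ and has a density $p$ with respect to the $d$-dimensional Lebesgue measure on $\mathcal{L}$, where $p$ is continuous and the distribution has finite second moments. For $\delta \in \mathbb{R}$ and $x \in \mathbb{R}^D$ define $$\varrho(x,\delta) \;=\; \int p(x_0)\, \mathcal{N}\!\left(x - x_0;\, 0,\, e^{2\delta} I_D\right) \mathrm{d}x_0,$$ the integral being over $\mathcal{L}$ with respect to its $d$-dimensional Lebesgue measure, i.e. $\varrho(\cdot,\delta)$ is the Lebesgue density on $\mathbb{R}^D$ of $X + e^{\delta} Z$ with $Z \sim \mathcal{N}(0, I_D)$ independent of $X$. Then for every $x \in \mathcal{L}$ with $p(x) > 0$, $$\lim_{\delta \to -\infty} \frac{\partial}{\partial \delta} \log \varrho(x,\delta) \;=\; d - D.$$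
   Context: $\mathcal{N}(y; \mu, \Sigma)$ denotes the Gaussian density with mean $\mu$ and covariance $\Sigma$ evaluated at $y$, and $I_D$ is the $D\times D$ identity matrix. The paper writes the data density as $p(\cdot,0)$ and, with an abuse of notation, identifies it with the density of the data with respect to $d$-dimensional Lebesgue measure on $\mathcal{L}$. *)

theory Defs
  imports "HOL-Analysis.Analysis"
begin

text \<open>A d-dimensional affine subspace L of the ambient space 'a (of dimension D = DIM('a))
  is represented as the image of an affine isometric embedding phi of a d-dimensional
  Euclidean space 'b (d = DIM('b)).  The d-dimensional Lebesgue measure on L is the
  push-forward of lborel on 'b under phi (independent of the chosen isometry).\<close>

definition affine_isometry :: "('b::euclidean_space \<Rightarrow> 'a::euclidean_space) \<Rightarrow> bool" where
  "affine_isometry \<phi> \<longleftrightarrow>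
     (\<exists>a f. linear f \<and> (\<forall>u. norm (f u) = norm u) \<and> (\<forall>u. \<phi> u = a + f u))"

definition gauss_density :: "real \<Rightarrow> 'a::euclidean_space \<Rightarrow> real" where
  "gauss_density s y = (2 * pi * s) powr (- real DIM('a) / 2) * exp (- (norm y)\<^sup>2 / (2 * s))"

definition smoothed_density ::
  "('b::euclidean_space \<Rightarrow> 'a::euclidean_space) \<Rightarrow> ('a \<Rightarrow> real) \<Rightarrow> 'a \<Rightarrow> real \<Rightarrow> real" where
  "smoothed_density \<phi> p x \<delta> =
     (\<integral>u. p (\<phi> u) * gauss_density (exp (2 * \<delta>)) (x - \<phi> u) \<partial>(lborel :: 'b measure))"

end

theory Submission
  imports Defs "HOL-Probability.Distributions" "HOL-Real_Asymp.Real_Asymp"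
begin


lemma norm_sq_basis: "(norm (v::'b::euclidean_space))\<^sup>2 = (\<Sum>b\<in>Basis. (v \<bullet> b)\<^sup>2)"
  by (simp only: power2_norm_eq_inner euclidean_inner[of v v]) (simp add: power2_eq_square)

lemma nn_std_normal: "(\<integral>\<^sup>+x. ennreal (std_normal_density x) \<partial>lborel) = 1"
  by (subst nn_integral_eq_integral) auto

lemma nn_std_normal2: "(\<integral>\<^sup>+x. ennreal (std_normal_density x * x\<^sup>2) \<partial>lborel) = 1"
proof -
  have "integral\<^sup>L lborel (\<lambda>x. std_normal_density x * x^2) = 1"
    using integral_std_normal_moment_even[of 1] by simp
  moreover have "integrable lborel (\<lambda>x. std_normal_density x * x^2)"
    using integrable_std_normal_moment[of 2] by simp
  ultimately show ?thesis using nn_integral_eq_integral[of lborel "\<lambda>x. std_normal_density x * x^2"]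
    by simp
qed

lemma prod_normal:
  "has_bochner_integral (lborel::'b::euclidean_space measure) (\<lambda>v. \<Prod>b\<in>Basis. std_normal_density (v \<bullet> b)) 1"
proof (rule has_bochner_integral_nn_integral)
  show "(\<integral>\<^sup>+v. ennreal (\<Prod>b\<in>Basis. std_normal_density (v \<bullet> b)) \<partial>(lborel::'b measure)) = ennreal 1"
    apply (subst prod_ennreal[symmetric]) apply simp
    apply (subst nn_integral_lborel_prod) by (auto simp: nn_std_normal)
qed (auto intro!: AE_I2 prod_nonneg)

lemma sq_prod_normal:
  "has_bochner_integral (lborel::'b::euclidean_space measure) (\<lambda>v. (norm v)\<^sup>2 * (\<Prod>b\<in>Basis. std_normal_density (v \<bullet> b))) (real DIM('b))"
proof (rule has_bochner_integral_nn_integral)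
  have eq: "ennreal ((norm v)\<^sup>2 * (\<Prod>b\<in>Basis. std_normal_density (v \<bullet> b))) =
     (\<Sum>c\<in>Basis. \<Prod>b\<in>Basis. ennreal (if b = c then std_normal_density (v \<bullet> b) * (v \<bullet> b)\<^sup>2 else std_normal_density (v \<bullet> b)))" for v :: 'b
  proof -
    have "(norm v)\<^sup>2 * (\<Prod>b\<in>Basis. std_normal_density (v \<bullet> b)) =
       (\<Sum>c\<in>Basis. \<Prod>b\<in>Basis. (if b = c then std_normal_density (v \<bullet> b) * (v \<bullet> b)\<^sup>2 else std_normal_density (v \<bullet> b)))"
    proof -
      have "(\<Prod>b\<in>Basis. (if b = c then std_normal_density (v \<bullet> b) * (v \<bullet> b)\<^sup>2 else std_normal_density (v \<bullet> b)))
          = (v \<bullet> c)\<^sup>2 * (\<Prod>b\<in>Basis. std_normal_density (v \<bullet> b))" if "c \<in> Basis" for c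
      proof -
        have "(\<Prod>b\<in>Basis. (if b = c then std_normal_density (v \<bullet> b) * (v \<bullet> b)\<^sup>2 else std_normal_density (v \<bullet> b)))
            = (\<Prod>b\<in>Basis. (if b = c then (v \<bullet> b)\<^sup>2 else 1) * std_normal_density (v \<bullet> b))"
          by (rule prod.cong) auto
        also have "\<dots> = (\<Prod>b\<in>Basis. (if b = c then (v \<bullet> b)\<^sup>2 else 1)) * (\<Prod>b\<in>Basis. std_normal_density (v \<bullet> b))"
          by (rule prod.distrib)
        also have "(\<Prod>b\<in>Basis. (if b = c then (v \<bullet> b)\<^sup>2 else 1)) = (v \<bullet> c)\<^sup>2"
          using that by (simp add: prod.delta)
        finally show ?thesis .
      qed
      then show ?thesis by (simp add: norm_sq_basis sum_distrib_right)
    qed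
    then show ?thesis
      by (simp add: sum_ennreal[symmetric] prod_ennreal[symmetric] prod_nonneg sum_nonneg)
  qed
  show "(\<integral>\<^sup>+v. ennreal ((norm v)\<^sup>2 * (\<Prod>b\<in>Basis. std_normal_density (v \<bullet> b))) \<partial>(lborel::'b measure)) = ennreal (real DIM('b))"
    apply (simp only: eq)
    apply (subst nn_integral_sum) apply simp
    apply (subst nn_integral_lborel_prod) apply simp apply simp
    apply (rule trans[of _ "\<Sum>c\<in>(Basis::'b set). 1"])
     apply (rule sum.cong, simp)
     apply (rule prod.neutral) apply (rule ballI)
     apply (case_tac "xa = x") apply (simp add: nn_std_normal2) apply (simp add: nn_std_normal)
    apply (simp add: ennreal_of_nat_eq_real_of_nat)
    done
qed (auto intro!: AE_I2 mult_nonneg_nonneg prod_nonneg)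

lemma gauss_prod: "exp (-(norm (v::'b::euclidean_space))\<^sup>2/2) = sqrt (2*pi)^DIM('b) * (\<Prod>b\<in>Basis. std_normal_density (v \<bullet> b))"
proof -
  have "(\<Prod>b\<in>(Basis::'b set). std_normal_density (v \<bullet> b)) = (\<Prod>b\<in>(Basis::'b set). 1 / sqrt (2*pi)) * (\<Prod>b\<in>Basis. exp (- (v \<bullet> b)\<^sup>2 / 2))"
    unfolding prod.distrib[symmetric] std_normal_density_def by (rule refl)
  also have "(\<Prod>b\<in>(Basis::'b set). exp (- (v \<bullet> b)\<^sup>2 / 2)) = exp (\<Sum>b\<in>Basis. - (v \<bullet> b)\<^sup>2 / 2)"
    by (simp add: exp_sum)
  also have "(\<Sum>b\<in>(Basis::'b set). - (v \<bullet> b)\<^sup>2 / 2) = -(norm v)\<^sup>2/2"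
    by (simp add: norm_sq_basis sum_divide_distrib sum_negf)
  also have "(\<Prod>b\<in>(Basis::'b set). 1 / sqrt (2*pi)) = 1 / sqrt (2*pi)^DIM('b)"
    by (simp add: power_one_over)
  finally show ?thesis by simp
qed

lemma gauss0: "has_bochner_integral (lborel::'b::euclidean_space measure) (\<lambda>v. exp(-(norm v)\<^sup>2/2)) (sqrt(2*pi)^DIM('b))"
proof -
  have e: "(\<lambda>v::'b. exp(-(norm v)\<^sup>2/2)) = (\<lambda>v. sqrt (2*pi)^DIM('b) * (\<Prod>b\<in>Basis. std_normal_density (v \<bullet> b)))"
    by (rule ext, rule gauss_prod)
  show ?thesis unfolding e using has_bochner_integral_mult_right[OF prod_normal, of "sqrt(2*pi)^DIM('b)"] by simp
qed

lemma gauss1: "has_bochner_integral (lborel::'b::euclidean_space measure) (\<lambda>v. (norm v)\<^sup>2 * exp(-(norm v)\<^sup>2/2)) (real DIM('b) * sqrt(2*pi)^DIM('b))"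
proof -
  have e: "(\<lambda>v::'b. (norm v)\<^sup>2 * exp(-(norm v)\<^sup>2/2)) = (\<lambda>v. sqrt (2*pi)^DIM('b) * ((norm v)\<^sup>2 * (\<Prod>b\<in>Basis. std_normal_density (v \<bullet> b))))"
    by (rule ext, subst gauss_prod, simp)
  show ?thesis unfolding e using has_bochner_integral_mult_right[OF sq_prod_normal, of "sqrt(2*pi)^DIM('b)"] by (simp add: mult_ac)
qed



lemma deriv_under_integral:
  fixes q :: "'b::euclidean_space \<Rightarrow> real" and k k' :: "real \<Rightarrow> 'b \<Rightarrow> real"
  assumes q: "integrable lborel q"
   and km: "\<And>t. k t \<in> borel_measurable lborel"
   and kd: "\<And>t u. ((\<lambda>t. k t u) has_real_derivative k' t u) (at t)"
   and kb: "\<And>t u. \<bar>k' t u\<bar> \<le> 1" and kb0: "\<And>t u. \<bar>k t u\<bar> \<le> 1"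
  shows "((\<lambda>t. \<integral>u. q u * k t u \<partial>lborel) has_real_derivative (\<integral>u. q u * k' t u \<partial>lborel)) (at t)"
proof -
  have qm: "q \<in> borel_measurable lborel" using q by auto
  have int: "integrable lborel (\<lambda>u. q u * k s u)" for s
  proof (rule Bochner_Integration.integrable_bound[OF q])
    show "(\<lambda>u. q u * k s u) \<in> borel_measurable lborel" using qm km by measurable
    show "AE u in lborel. norm (q u * k s u) \<le> norm (q u)"
      using kb0 by (auto simp: abs_mult intro!: AE_I2 mult_left_le)
  qed
  have mvt: "\<bar>k y u - k s u\<bar> \<le> \<bar>y - s\<bar>" for y s u
    using field_differentiable_bound[of UNIV "\<lambda>t. k t u" "\<lambda>t. k' t u" 1 y s] kd kb
    by (auto simp: has_field_derivative_at_within)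
  show ?thesis unfolding has_field_derivative_iff
  proof (subst tendsto_at_iff_sequentially, intro allI impI)
    fix X :: "nat \<Rightarrow> real"
    assume X: "\<forall>i. X i \<in> UNIV - {t}" "X \<longlonglongrightarrow> t"
    have eq: "((\<lambda>y. ((\<integral>u. q u * k y u \<partial>lborel) - (\<integral>u. q u * k t u \<partial>lborel)) / (y - t)) \<circ> X) i
        = (\<integral>u. q u * ((k (X i) u - k t u) / (X i - t)) \<partial>lborel)" for i
    proof -
      have "(\<integral>u. q u * ((k (X i) u - k t u) / (X i - t)) \<partial>lborel)
          = (\<integral>u. (q u * k (X i) u - q u * k t u) / (X i - t) \<partial>lborel)"
        by (simp add: algebra_simps diff_divide_distrib)
      also have "\<dots> = (\<integral>u. (q u * k (X i) u - q u * k t u) \<partial>lborel) / (X i - t)"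
        by simp
      also have "\<dots> = ((\<integral>u. q u * k (X i) u \<partial>lborel) - (\<integral>u. q u * k t u \<partial>lborel)) / (X i - t)"
        using int by simp
      finally show ?thesis by (simp only: o_def)
    qed
    have kdm: "(\<lambda>u. k' t u) \<in> borel_measurable lborel"
    proof (rule borel_measurable_LIMSEQ_real)
      show "(\<lambda>i. (k (X i) u - k t u) / (X i - t)) \<longlonglongrightarrow> k' t u" for u
      proof -
        have "((\<lambda>y. (k y u - k t u) / (y - t)) \<longlongrightarrow> k' t u) (at t)"
          using kd[of u t] unfolding has_field_derivative_iff .
        then show ?thesis using X unfolding tendsto_at_iff_sequentially by (auto simp: o_def)
      qed
      show "(\<lambda>u. (k (X i) u - k t u) / (X i - t)) \<in> borel_measurable lborel" for i
        using km by measurable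
    qed
    show "((\<lambda>y. ((\<integral>u. q u * k y u \<partial>lborel) - (\<integral>u. q u * k t u \<partial>lborel)) / (y - t)) \<circ> X)
        \<longlonglongrightarrow> (\<integral>u. q u * k' t u \<partial>lborel)"
      unfolding eq
    proof (rule integral_dominated_convergence[where w="\<lambda>u. norm (q u)"])
      show "(\<lambda>u. q u * k' t u) \<in> borel_measurable lborel" using qm kdm by measurable
      show "(\<lambda>u. q u * ((k (X i) u - k t u) / (X i - t))) \<in> borel_measurable lborel" for i
        using qm km by measurable
      show "integrable lborel (\<lambda>u. norm (q u))" using q by auto
      show "AE u in lborel. (\<lambda>i. q u * ((k (X i) u - k t u) / (X i - t))) \<longlonglongrightarrow> q u * k' t u"
      proof (rule AE_I2, rule tendsto_mult_left)
        fix u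
        have "((\<lambda>y. (k y u - k t u) / (y - t)) \<longlongrightarrow> k' t u) (at t)"
          using kd[of u t] unfolding has_field_derivative_iff .
        then show "(\<lambda>i. (k (X i) u - k t u) / (X i - t)) \<longlonglongrightarrow> k' t u"
          using X unfolding tendsto_at_iff_sequentially by (auto simp: o_def)
      qed
      show "AE u in lborel. norm (q u * ((k (X i) u - k t u) / (X i - t))) \<le> norm (q u)" for i
      proof (rule AE_I2)
        fix u
        have "X i \<noteq> t" using X by auto
        then have "\<bar>(k (X i) u - k t u) / (X i - t)\<bar> \<le> 1"
          using mvt[of "X i" u t] by (simp add: abs_divide divide_le_eq_1)
        then have "\<bar>q u\<bar> * \<bar>(k (X i) u - k t u) / (X i - t)\<bar> \<le> \<bar>q u\<bar>"
          by (rule mult_left_le) simp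
        then show "norm (q u * ((k (X i) u - k t u) / (X i - t))) \<le> norm (q u)"
          by (simp only: real_norm_def abs_mult)
      qed
    qed
  qed
qed



lemma lborel_integral_scale:
  fixes g :: "'b::euclidean_space \<Rightarrow> real"
  assumes g[measurable]: "g \<in> borel_measurable borel" and c: "c > 0"
  shows "(\<integral>x. g x \<partial>lborel) = c ^ DIM('b) * (\<integral>v. g (t + c *\<^sub>R v) \<partial>lborel)"
proof -
  have e: "(lborel::'b measure) = density (distr lborel borel (\<lambda>x. t + c *\<^sub>R x)) (\<lambda>_. \<bar>c\<bar>^DIM('b))"
    using c by (intro lborel_affine) simp
  have "(\<integral>x. g x \<partial>lborel) = (\<integral>x. g x \<partial>density (distr lborel borel (\<lambda>x. t + c *\<^sub>R x)) (\<lambda>_. \<bar>c\<bar>^DIM('b)))"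
    by (rule arg_cong[where f="\<lambda>M. integral\<^sup>L M g", OF e])
  also have "\<dots> = (\<integral>x. \<bar>c\<bar>^DIM('b) * g x \<partial>distr lborel borel (\<lambda>x. t + c *\<^sub>R x))"
    by (subst integral_density) auto
  also have "\<dots> = (\<integral>v. \<bar>c\<bar>^DIM('b) * g (t + c *\<^sub>R v) \<partial>lborel)"
    by (subst integral_distr) auto
  finally show ?thesis using c by simp
qed

lemma exp_lim_aux:
  fixes d r :: real assumes "r > 0"
  shows "((\<lambda>s. exp (d * s) * exp (- (r\<^sup>2 * exp (2 * s)) / 4)) \<longlongrightarrow> 0) at_top"
proof (rule Lim_null_comparison)
  have a: "\<bar>d\<bar> + 1 > 0" by simp
  define a where "a = \<bar>d\<bar> + 1"
  have "a > 0" using a a_def by simp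
  then show "((\<lambda>s. exp (a * s) * exp (- (r\<^sup>2 * exp (2 * s)) / 4)) \<longlongrightarrow> 0) at_top"
    using assms by real_asymp
  show "\<forall>\<^sub>F s in at_top. norm (exp (d * s) * exp (- (r\<^sup>2 * exp (2 * s)) / 4)) \<le> exp (a * s) * exp (- (r\<^sup>2 * exp (2 * s)) / 4)"
    unfolding eventually_at_top_linorder
  proof (intro exI[of _ 0] allI impI)
    fix s :: real assume "s \<ge> 0"
    then have "d * s \<le> a * s" unfolding a_def by (intro mult_right_mono) auto
    then show "norm (exp (d * s) * exp (- (r\<^sup>2 * exp (2 * s)) / 4)) \<le> exp (a * s) * exp (- (r\<^sup>2 * exp (2 * s)) / 4)"
      by simp
  qed
qed

lemma gauss_limit:
  fixes q :: "'b::euclidean_space \<Rightarrow> real" and W :: "real \<Rightarrow> real" and u0 :: 'b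
  assumes q: "integrable lborel q" and qnn: "\<And>u. q u \<ge> 0" and qc: "continuous_on UNIV q"
   and Wm[measurable]: "W \<in> borel_measurable borel"
   and Wb: "\<And>y. y \<ge> 0 \<Longrightarrow> \<bar>W y\<bar> \<le> M * exp (- y / 4)"
   and Wi: "integrable lborel (\<lambda>v::'b. W ((norm v)\<^sup>2))"
  shows "((\<lambda>t. exp (- real DIM('b) * t) * (\<integral>u. q u * W ((dist u u0)\<^sup>2 * exp (-2*t)) \<partial>lborel))
           \<longlongrightarrow> q u0 * (\<integral>v. W ((norm (v::'b))\<^sup>2) \<partial>lborel)) at_bot"
proof -
  let ?d = "real DIM('b)"
  have qm[measurable]: "q \<in> borel_measurable borel" using borel_measurable_integrable[OF q] by simp
  have "\<bar>W 0\<bar> \<le> M" using Wb[of 0] by simp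
  then have M0: "M \<ge> 0" by (meson abs_ge_zero order_trans)
  have Wb1: "\<bar>W y\<bar> \<le> M" if "y \<ge> 0" for y
  proof -
    have "exp (- y / 4) \<le> 1" using that by simp
    then show ?thesis using Wb[OF that] M0 by (smt (verit) mult_left_le)
  qed
  have "continuous (at u0) q" using qc by (simp add: continuous_on_eq_continuous_at)
  then obtain r where r: "r > 0" "\<And>u. dist u u0 < r \<Longrightarrow> dist (q u) (q u0) < 1"
    unfolding continuous_at_eps_delta by (metis zero_less_one)
  define B where "B = ball u0 r"
  have Bm[measurable]: "B \<in> sets borel" unfolding B_def by simp
  define F1 where "F1 s = (\<integral>v. q (u0 + exp (-s) *\<^sub>R v) * indicator B (u0 + exp (-s) *\<^sub>R v) * W ((norm v)\<^sup>2) \<partial>lborel)" for s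
  define F2 where "F2 s = exp (real DIM('b) * s) * (\<integral>u. q u * (1 - indicator B u) * W ((dist u u0)\<^sup>2 * exp (2 * s)) \<partial>lborel)" for s
  have intg: "integrable lborel (\<lambda>u. q u * h u * W ((dist u u0)\<^sup>2 * exp (2 * s)))"
    if hm: "h \<in> borel_measurable borel" and hb: "\<And>u. \<bar>h u\<bar> \<le> 1" for h s
  proof (rule Bochner_Integration.integrable_bound[of _ "\<lambda>u. M * q u"])
    show "integrable lborel (\<lambda>u. M * q u)" using q by simp
    show "(\<lambda>u. q u * h u * W ((dist u u0)\<^sup>2 * exp (2 * s))) \<in> borel_measurable lborel"
      using hm by (simp add: measurable_lborel1)
    show "AE u in lborel. norm (q u * h u * W ((dist u u0)\<^sup>2 * exp (2 * s))) \<le> norm (M * q u)"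
    proof (rule AE_I2)
      fix u
      have "\<bar>W ((dist u u0)\<^sup>2 * exp (2 * s))\<bar> \<le> M" by (rule Wb1) simp
      then have "\<bar>h u\<bar> * \<bar>W ((dist u u0)\<^sup>2 * exp (2 * s))\<bar> \<le> 1 * M"
        using hb[of u] by (intro mult_mono) auto
      then have "q u * (\<bar>h u\<bar> * \<bar>W ((dist u u0)\<^sup>2 * exp (2 * s))\<bar>) \<le> q u * M"
        using qnn[of u] by (intro mult_left_mono) auto
      then show "norm (q u * h u * W ((dist u u0)\<^sup>2 * exp (2 * s))) \<le> norm (M * q u)"
        using qnn[of u] M0 by (simp add: abs_mult mult_ac)
    qed
  qed
  have split: "exp (?d * s) * (\<integral>u. q u * W ((dist u u0)\<^sup>2 * exp (2 * s)) \<partial>lborel) = F1 s + F2 s" for s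
  proof -
    have i1: "integrable lborel (\<lambda>u. q u * indicator B u * W ((dist u u0)\<^sup>2 * exp (2 * s)))"
      by (rule intg) (auto simp: indicator_def)
    have i2: "integrable lborel (\<lambda>u. q u * (1 - indicator B u) * W ((dist u u0)\<^sup>2 * exp (2 * s)))"
      by (rule intg) (auto simp: indicator_def)
    have "(\<integral>u. q u * W ((dist u u0)\<^sup>2 * exp (2 * s)) \<partial>lborel)
       = (\<integral>u. q u * indicator B u * W ((dist u u0)\<^sup>2 * exp (2 * s)) + q u * (1 - indicator B u) * W ((dist u u0)\<^sup>2 * exp (2 * s)) \<partial>lborel)"
      by (rule Bochner_Integration.integral_cong) (auto simp: algebra_simps)
    also have "\<dots> = (\<integral>u. q u * indicator B u * W ((dist u u0)\<^sup>2 * exp (2 * s)) \<partial>lborel) + (\<integral>u. q u * (1 - indicator B u) * W ((dist u u0)\<^sup>2 * exp (2 * s)) \<partial>lborel)"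
      using i1 i2 by (rule Bochner_Integration.integral_add)
    finally have e1: "(\<integral>u. q u * W ((dist u u0)\<^sup>2 * exp (2 * s)) \<partial>lborel) = \<dots>" .
    have "(\<integral>u. q u * indicator B u * W ((dist u u0)\<^sup>2 * exp (2 * s)) \<partial>lborel)
       = exp (-s) ^ DIM('b) * (\<integral>v. q (u0 + exp (-s) *\<^sub>R v) * indicator B (u0 + exp (-s) *\<^sub>R v) * W ((dist (u0 + exp (-s) *\<^sub>R v) u0)\<^sup>2 * exp (2 * s)) \<partial>lborel)"
      by (rule lborel_integral_scale) auto
    also have "(\<lambda>v. q (u0 + exp (-s) *\<^sub>R v) * indicator B (u0 + exp (-s) *\<^sub>R v) * W ((dist (u0 + exp (-s) *\<^sub>R v) u0)\<^sup>2 * exp (2 * s)))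
        = (\<lambda>v. q (u0 + exp (-s) *\<^sub>R v) * indicator B (u0 + exp (-s) *\<^sub>R v) * W ((norm v)\<^sup>2))"
    proof (rule ext)
      fix v
      have "(dist (u0 + exp (-s) *\<^sub>R v) u0)\<^sup>2 * exp (2 * s) = (exp (-s) * norm v)\<^sup>2 * exp (2 * s)"
        by (simp add: dist_norm)
      also have "\<dots> = (norm v)\<^sup>2 * (exp (-s) * exp s)\<^sup>2"
        unfolding exp_double power_mult_distrib by (simp only: mult_ac)
      also have "\<dots> = (norm v)\<^sup>2" by (simp add: exp_add[symmetric])
      finally show "q (u0 + exp (-s) *\<^sub>R v) * indicator B (u0 + exp (-s) *\<^sub>R v) * W ((dist (u0 + exp (-s) *\<^sub>R v) u0)\<^sup>2 * exp (2 * s))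
        = q (u0 + exp (-s) *\<^sub>R v) * indicator B (u0 + exp (-s) *\<^sub>R v) * W ((norm v)\<^sup>2)" by simp
    qed
    finally have e2: "(\<integral>u. q u * indicator B u * W ((dist u u0)\<^sup>2 * exp (2 * s)) \<partial>lborel) = exp (-s) ^ DIM('b) * F1 s"
      unfolding F1_def .
    have e3: "exp (?d * s) * exp (-s) ^ DIM('b) = 1"
      by (simp add: exp_of_nat_mult[symmetric] exp_add[symmetric])
    show ?thesis unfolding e1 e2 F2_def
      by (simp add: distrib_left e3 mult.assoc[symmetric])
  qed
  have lim1: "(F1 \<longlongrightarrow> q u0 * (\<integral>v. W ((norm (v::'b))\<^sup>2) \<partial>lborel)) at_top"
    unfolding F1_def integral_mult_right_zero[symmetric]
  proof (rule integral_dominated_convergence_at_top[where w="\<lambda>v::'b. (q u0 + 1) * \<bar>W ((norm v)\<^sup>2)\<bar>"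
      and s="\<lambda>s v. q (u0 + exp (-s) *\<^sub>R v) * indicator B (u0 + exp (-s) *\<^sub>R v) * W ((norm v)\<^sup>2)"
      and f="\<lambda>v::'b. q u0 * W ((norm v)\<^sup>2)"])
    show "(\<lambda>v::'b. q u0 * W ((norm v)\<^sup>2)) \<in> borel_measurable lborel" by (simp add: measurable_lborel1)
    show "(\<lambda>v. q (u0 + exp (-s) *\<^sub>R v) * indicator B (u0 + exp (-s) *\<^sub>R v) * W ((norm v)\<^sup>2)) \<in> borel_measurable lborel" for s
      by (simp add: measurable_lborel1)
    show "integrable lborel (\<lambda>v::'b. (q u0 + 1) * \<bar>W ((norm v)\<^sup>2)\<bar>)"
      using Wi by (intro integrable_mult_right integrable_abs)
    show "AE v in lborel. ((\<lambda>s. q (u0 + exp (-s) *\<^sub>R v) * indicator B (u0 + exp (-s) *\<^sub>R v) * W ((norm v)\<^sup>2)) \<longlongrightarrow> q u0 * W ((norm v)\<^sup>2)) at_top"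
    proof (rule AE_I2)
      fix v :: 'b
      have l0: "((\<lambda>s. u0 + exp (-s) *\<^sub>R v) \<longlongrightarrow> u0) at_top"
      proof -
        have "((\<lambda>s::real. exp (-s)) \<longlongrightarrow> 0) at_top" by real_asymp
        then have "((\<lambda>s. u0 + exp (-s) *\<^sub>R v) \<longlongrightarrow> u0 + 0 *\<^sub>R v) at_top"
          by (intro tendsto_intros)
        then show ?thesis by simp
      qed
      have lq: "((\<lambda>s. q (u0 + exp (-s) *\<^sub>R v)) \<longlongrightarrow> q u0) at_top"
        by (rule continuous_on_tendsto_compose[OF qc l0]) auto
      have ev: "\<forall>\<^sub>F s in at_top. indicator B (u0 + exp (-s) *\<^sub>R v) = (1::real)"
      proof -
        have "\<forall>\<^sub>F s in at_top. u0 + exp (-s) *\<^sub>R v \<in> B"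
          using l0 r(1) unfolding B_def tendsto_def by (metis open_ball centre_in_ball)
        then show ?thesis by eventually_elim simp
      qed
      have "((\<lambda>s. q (u0 + exp (-s) *\<^sub>R v) * 1 * W ((norm v)\<^sup>2)) \<longlongrightarrow> q u0 * 1 * W ((norm v)\<^sup>2)) at_top"
        by (intro tendsto_intros lq)
      then have t1: "((\<lambda>s. q (u0 + exp (-s) *\<^sub>R v) * 1 * W ((norm v)\<^sup>2)) \<longlongrightarrow> q u0 * W ((norm v)\<^sup>2)) at_top"
        by simp
      have ev2: "\<forall>\<^sub>F s in at_top. q (u0 + exp (-s) *\<^sub>R v) * 1 * W ((norm v)\<^sup>2) = q (u0 + exp (-s) *\<^sub>R v) * indicator B (u0 + exp (-s) *\<^sub>R v) * W ((norm v)\<^sup>2)"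
        using ev by eventually_elim simp
      show "((\<lambda>s. q (u0 + exp (-s) *\<^sub>R v) * indicator B (u0 + exp (-s) *\<^sub>R v) * W ((norm v)\<^sup>2)) \<longlongrightarrow> q u0 * W ((norm v)\<^sup>2)) at_top"
        by (rule Lim_transform_eventually[OF t1 ev2])
    qed
    show "\<forall>\<^sub>F s in at_top. AE v in lborel. norm (q (u0 + exp (-s) *\<^sub>R v) * indicator B (u0 + exp (-s) *\<^sub>R v) * W ((norm v)\<^sup>2)) \<le> (q u0 + 1) * \<bar>W ((norm v)\<^sup>2)\<bar>"
    proof (rule always_eventually, intro allI AE_I2)
      fix s v
      have "q (u0 + exp (-s) *\<^sub>R v) * indicator B (u0 + exp (-s) *\<^sub>R v) \<le> q u0 + 1"
        "0 \<le> q (u0 + exp (-s) *\<^sub>R v) * indicator B (u0 + exp (-s) *\<^sub>R v)"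
        using r(2)[of "u0 + exp (-s) *\<^sub>R v"] qnn[of "u0 + exp (-s) *\<^sub>R v"] qnn[of u0]
        by (auto simp: indicator_def B_def dist_commute dist_real_def)
      then show "norm (q (u0 + exp (-s) *\<^sub>R v) * indicator B (u0 + exp (-s) *\<^sub>R v) * W ((norm v)\<^sup>2)) \<le> (q u0 + 1) * \<bar>W ((norm v)\<^sup>2)\<bar>"
        by (simp add: abs_mult mult_right_mono)
    qed
  qed
  have lim2: "(F2 \<longlongrightarrow> 0) at_top"
  proof (rule Lim_null_comparison)
    let ?Q = "\<integral>u. q u \<partial>lborel"
    show "((\<lambda>s. M * ?Q * (exp (?d * s) * exp (- (r\<^sup>2 * exp (2 * s)) / 4))) \<longlongrightarrow> 0) at_top"
      using exp_lim_aux[OF r(1), of ?d] by (intro tendsto_mult_right_zero)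
    show "\<forall>\<^sub>F s in at_top. norm (F2 s) \<le> M * ?Q * (exp (?d * s) * exp (- (r\<^sup>2 * exp (2 * s)) / 4))"
    proof (rule always_eventually, rule allI)
      fix s
      let ?E = "exp (- (r\<^sup>2 * exp (2 * s)) / 4)"
      have pw: "\<bar>q u * (1 - indicator B u) * W ((dist u u0)\<^sup>2 * exp (2 * s))\<bar> \<le> M * ?E * q u" for u
      proof (cases "u \<in> B")
        case True then show ?thesis using qnn[of u] M0 by simp
      next
        case False
        then have "r \<le> dist u u0" by (simp add: B_def dist_commute)
        then have "r\<^sup>2 \<le> (dist u u0)\<^sup>2" using r(1) by (intro power_mono) auto
        then have "r\<^sup>2 * exp (2 * s) \<le> (dist u u0)\<^sup>2 * exp (2 * s)" by simp
        then have "exp (- ((dist u u0)\<^sup>2 * exp (2 * s)) / 4) \<le> ?E" by simp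
        then have "\<bar>W ((dist u u0)\<^sup>2 * exp (2 * s))\<bar> \<le> M * ?E"
          using Wb[of "(dist u u0)\<^sup>2 * exp (2 * s)"] M0 by (smt (verit) mult_left_mono zero_le_mult_iff zero_le_power2 exp_ge_zero)
        then have b: "q u * \<bar>W ((dist u u0)\<^sup>2 * exp (2 * s))\<bar> \<le> q u * (M * ?E)"
          by (rule mult_left_mono) (rule qnn)
        have a: "\<bar>q u * (1 - indicator B u) * W ((dist u u0)\<^sup>2 * exp (2 * s))\<bar> = q u * \<bar>W ((dist u u0)\<^sup>2 * exp (2 * s))\<bar>"
          using False qnn[of u] by (simp add: abs_mult)
        have c: "M * ?E * q u = q u * (M * ?E)" by (simp only: mult_ac)
        show ?thesis using a b c by linarith
      qed
      have "\<bar>\<integral>u. q u * (1 - indicator B u) * W ((dist u u0)\<^sup>2 * exp (2 * s)) \<partial>lborel\<bar>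
          \<le> (\<integral>u. \<bar>q u * (1 - indicator B u) * W ((dist u u0)\<^sup>2 * exp (2 * s))\<bar> \<partial>lborel)"
        by (rule integral_abs_bound)
      also have "\<dots> \<le> (\<integral>u. M * ?E * q u \<partial>lborel)"
      proof (rule integral_mono)
        have i2: "integrable lborel (\<lambda>u. q u * (1 - indicator B u) * W ((dist u u0)\<^sup>2 * exp (2 * s)))"
          by (rule intg) (auto simp: indicator_def)
        then show "integrable lborel (\<lambda>u. \<bar>q u * (1 - indicator B u) * W ((dist u u0)\<^sup>2 * exp (2 * s))\<bar>)"
          by (rule integrable_abs)
        show "integrable lborel (\<lambda>u. M * ?E * q u)" using q by (rule integrable_mult_right)
        show "\<bar>q u * (1 - indicator B u) * W ((dist u u0)\<^sup>2 * exp (2 * s))\<bar> \<le> M * ?E * q u" for u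
          by (rule pw)
      qed
      also have "\<dots> = M * ?E * ?Q" by simp
      finally have "\<bar>\<integral>u. q u * (1 - indicator B u) * W ((dist u u0)\<^sup>2 * exp (2 * s)) \<partial>lborel\<bar> \<le> M * ?E * ?Q" .
      then have "exp (?d * s) * \<bar>\<integral>u. q u * (1 - indicator B u) * W ((dist u u0)\<^sup>2 * exp (2 * s)) \<partial>lborel\<bar> \<le> exp (?d * s) * (M * ?E * ?Q)"
        by (intro mult_left_mono) auto
      then show "norm (F2 s) \<le> M * ?Q * (exp (?d * s) * ?E)"
        unfolding F2_def by (simp add: abs_mult mult_ac)
    qed
  qed
  have "((\<lambda>s. F1 s + F2 s) \<longlongrightarrow> q u0 * (\<integral>v. W ((norm (v::'b))\<^sup>2) \<partial>lborel) + 0) at_top"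
    by (intro tendsto_add lim1 lim2)
  then have "((\<lambda>s. exp (?d * s) * (\<integral>u. q u * W ((dist u u0)\<^sup>2 * exp (2 * s)) \<partial>lborel)) \<longlongrightarrow> q u0 * (\<integral>v. W ((norm (v::'b))\<^sup>2) \<partial>lborel)) at_top"
    by (simp add: split)
  then show ?thesis
    by (subst filterlim_at_bot_mirror) simp
qed



lemma aux_exp: "y \<ge> 0 \<Longrightarrow> y * exp (- y / 2) \<le> (1::real)"
proof -
  assume y: "y \<ge> 0"
  have "1 + y/4 \<le> exp (y/4)" by (rule exp_ge_add_one_self)
  then have "(1 + y/4)\<^sup>2 \<le> (exp (y/4))\<^sup>2" using y by (intro power_mono) auto
  also have "(exp (y/4))\<^sup>2 = exp (y/2)" by (simp add: power2_eq_square exp_add[symmetric])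
  finally have ex: "(1 + y/4)\<^sup>2 \<le> exp (y/2)" .
  have "(1 + y/4)\<^sup>2 - y = (1 - y/4)\<^sup>2" by (simp add: power2_eq_square field_simps)
  then have "y \<le> (1 + y/4)\<^sup>2" using zero_le_power2[of "1 - y/4"] by linarith
  then have "y \<le> exp (y/2)" using ex by linarith
  then have "y * exp (- y / 2) \<le> exp (y/2) * exp (- y / 2)" by (intro mult_right_mono) auto
  also have "\<dots> = 1" by (simp add: exp_add[symmetric])
  finally show ?thesis .
qed


theorem theorem3p1:
  fixes \<phi> :: "'b::euclidean_space \<Rightarrow> 'a::euclidean_space"
    and p :: "'a \<Rightarrow> real"
    and x :: 'a
  assumes iso: "affine_isometry \<phi>"
    and nonneg: "\<And>u. p (\<phi> u) \<ge> 0"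
    and cont: "continuous_on (range \<phi>) p"
    and integrable: "integrable (lborel :: 'b measure) (\<lambda>u. p (\<phi> u))"
    and normalized: "(\<integral>u. p (\<phi> u) \<partial>(lborel :: 'b measure)) = 1"
    and second_moment: "integrable (lborel :: 'b measure) (\<lambda>u. p (\<phi> u) * (norm (\<phi> u))\<^sup>2)"
    and xL: "x \<in> range \<phi>"
    and px: "p x > 0"
  shows "\<exists>g. (\<forall>\<^sub>F \<delta> in at_bot.
               ((\<lambda>t. ln (smoothed_density \<phi> p x t)) has_real_derivative g \<delta>) (at \<delta>))
          \<and> (g \<longlongrightarrow> real DIM('b) - real DIM('a)) at_bot"
proof -
  obtain a f where lin: "linear f" and nf: "\<And>u. norm (f u) = norm u" and phi: "\<And>u. \<phi> u = a + f u"
    using iso unfolding affine_isometry_def by blast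
  obtain u0 where x: "x = \<phi> u0" using xL by auto
  define q where "q u = p (\<phi> u)" for u
  have q_int: "integrable lborel q" using integrable unfolding q_def by simp
  have qnn: "\<And>u. q u \<ge> 0" unfolding q_def by (rule nonneg)
  have qu0: "q u0 > 0" using px x unfolding q_def by simp
  have dist_eq: "norm (x - \<phi> u) = dist u u0" for u
  proof -
    have "x - \<phi> u = f (u0 - u)" using x phi lin by (simp add: linear_diff)
    then show ?thesis using nf by (simp add: dist_norm norm_minus_commute)
  qed
  have phic: "continuous_on UNIV \<phi>"
  proof -
    have "continuous_on UNIV f" using lin by (simp add: linear_continuous_on linear_conv_bounded_linear)
    then show ?thesis unfolding phi[abs_def] by (intro continuous_intros)
  qed
  have qc: "continuous_on UNIV q"
    unfolding q_def[abs_def] by (rule continuous_on_compose2[OF cont phic]) auto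
  define Dm where "Dm = real DIM('a)"
  define d where "d = real DIM('b)"
  define H where "H t = (\<integral>u. q u * exp (- ((dist u u0)\<^sup>2 * exp (-2*t)) / 2) \<partial>lborel)" for t
  define Hd where "Hd t = (\<integral>u. q u * ((dist u u0)\<^sup>2 * exp (-2*t) * exp (- ((dist u u0)\<^sup>2 * exp (-2*t)) / 2)) \<partial>lborel)" for t
  define C where "C = (2*pi) powr (- Dm / 2)"
  have Cpos: "C > 0" unfolding C_def by simp
  have rho: "smoothed_density \<phi> p x t = C * exp (- Dm * t) * H t" for t
  proof -
    have e: "p (\<phi> u) * gauss_density (exp (2 * t)) (x - \<phi> u)
        = (C * exp (- Dm * t)) * (q u * exp (- ((dist u u0)\<^sup>2 * exp (-2*t)) / 2))" for u
    proof -
      have p1: "(2 * pi * exp (2 * t)) powr (- Dm / 2) = (2 * pi) powr (- Dm / 2) * exp (2 * t) powr (- Dm / 2)"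
        by (rule powr_mult)
      have p2: "exp (2 * t) powr (- Dm / 2) = exp (- Dm * t)"
        unfolding powr_def by (simp add: algebra_simps)
      have "(2 * pi * exp (2 * t)) powr (- real DIM('a) / 2) = C * exp (- Dm * t)"
        using p1 p2 unfolding C_def Dm_def by simp
      moreover have "(norm (x - \<phi> u))\<^sup>2 / (2 * exp (2 * t)) = (dist u u0)\<^sup>2 * exp (-2*t) / 2"
        by (simp add: dist_eq exp_minus field_simps)
      ultimately show ?thesis unfolding gauss_density_def q_def by simp
    qed
    show ?thesis unfolding smoothed_density_def e H_def by simp
  qed
  have Hderiv: "(H has_real_derivative Hd t) (at t)" for t
    unfolding H_def[abs_def] Hd_def
  proof (rule deriv_under_integral[OF q_int])
    show "(\<lambda>u. exp (- ((dist u u0)\<^sup>2 * exp (- 2 * s)) / 2)) \<in> borel_measurable lborel" for s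
      by (simp add: measurable_lborel1)
    show "((\<lambda>t. exp (- ((dist u u0)\<^sup>2 * exp (- 2 * t)) / 2)) has_real_derivative
        (dist u u0)\<^sup>2 * exp (- 2 * s) * exp (- ((dist u u0)\<^sup>2 * exp (- 2 * s)) / 2)) (at s)" for s u
      by (rule derivative_eq_intros refl | simp)+
    show "\<bar>(dist u u0)\<^sup>2 * exp (- 2 * s) * exp (- ((dist u u0)\<^sup>2 * exp (- 2 * s)) / 2)\<bar> \<le> 1" for s u
      using aux_exp[of "(dist u u0)\<^sup>2 * exp (- 2 * s)"] by simp
    show "\<bar>exp (- ((dist u u0)\<^sup>2 * exp (- 2 * s)) / 2)\<bar> \<le> 1" for s u
      by simp
  qed
  define I0 where "I0 = sqrt (2*pi) ^ DIM('b)"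
  have I0pos: "I0 > 0" unfolding I0_def by simp
  have limA: "((\<lambda>t. exp (- d * t) * H t) \<longlongrightarrow> q u0 * I0) at_bot"
  proof -
    have "((\<lambda>t. exp (- real DIM('b) * t) * (\<integral>u. q u * (\<lambda>y. exp (- y / 2)) ((dist u u0)\<^sup>2 * exp (-2*t)) \<partial>lborel))
           \<longlongrightarrow> q u0 * (\<integral>v. (\<lambda>y. exp (- y / 2)) ((norm (v::'b))\<^sup>2) \<partial>lborel)) at_bot"
    proof (rule gauss_limit[OF q_int qnn qc, where M=1])
      show "\<bar>exp (- y / 2)\<bar> \<le> 1 * exp (- y / 4)" if "y \<ge> 0" for y :: real
        using that by simp
      show "integrable lborel (\<lambda>v::'b. exp (- (norm v)\<^sup>2 / 2))"
        by (rule integrable.intros[OF gauss0])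
    qed simp
    moreover have "(\<integral>v. exp (- (norm (v::'b))\<^sup>2 / 2) \<partial>lborel) = I0"
      unfolding I0_def by (rule has_bochner_integral_integral_eq[OF gauss0])
    ultimately show ?thesis unfolding H_def d_def by simp
  qed
  have limB: "((\<lambda>t. exp (- d * t) * Hd t) \<longlongrightarrow> q u0 * (d * I0)) at_bot"
  proof -
    have "((\<lambda>t. exp (- real DIM('b) * t) * (\<integral>u. q u * (\<lambda>y. y * exp (- y / 2)) ((dist u u0)\<^sup>2 * exp (-2*t)) \<partial>lborel))
           \<longlongrightarrow> q u0 * (\<integral>v. (\<lambda>y. y * exp (- y / 2)) ((norm (v::'b))\<^sup>2) \<partial>lborel)) at_bot"
    proof (rule gauss_limit[OF q_int qnn qc, where M=2])
      show "\<bar>y * exp (- y / 2)\<bar> \<le> 2 * exp (- y / 4)" if "y \<ge> 0" for y :: real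
      proof -
        have "(y/2) * exp (- (y/2) / 2) \<le> 1" using aux_exp[of "y/2"] that by simp
        then have "y * exp (- y / 4) \<le> 2" by simp
        then have third: "y * exp (- y / 4) * exp (- y / 4) \<le> 2 * exp (- y / 4)"
          by (intro mult_right_mono) auto
        have "exp (- y / 4) * exp (- y / 4) = exp (- y / 2)"
          by (simp add: exp_add[symmetric])
        then have eq': "\<bar>y * exp (- y / 2)\<bar> = y * exp (- y / 4) * exp (- y / 4)"
          using that by (simp add: mult.assoc)
        show ?thesis unfolding eq' by (rule third)
      qed
      show "integrable lborel (\<lambda>v::'b. (norm v)\<^sup>2 * exp (- (norm v)\<^sup>2 / 2))"
        by (rule integrable.intros[OF gauss1])
    qed simp
    moreover have "(\<integral>v. (norm (v::'b))\<^sup>2 * exp (- (norm v)\<^sup>2 / 2) \<partial>lborel) = d * I0"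
      unfolding I0_def d_def by (rule has_bochner_integral_integral_eq[OF gauss1])
    ultimately show ?thesis unfolding Hd_def d_def by (simp add: mult.assoc)
  qed
  have evA: "\<forall>\<^sub>F t in at_bot. exp (- d * t) * H t > 0"
    using order_tendstoD(1)[OF limA] qu0 I0pos by simp
  define g where "g t = (exp (- d * t) * Hd t) / (exp (- d * t) * H t) - Dm" for t
  show ?thesis
  proof (intro exI conjI)
    show "\<forall>\<^sub>F \<delta> in at_bot. ((\<lambda>t. ln (smoothed_density \<phi> p x t)) has_real_derivative g \<delta>) (at \<delta>)"
      using evA
    proof eventually_elim
      fix \<delta> assume "exp (- d * \<delta>) * H \<delta> > 0"
      then have Hp: "H \<delta> > 0" by (simp add: zero_less_mult_iff)
      have dd: "((\<lambda>t. C * exp (- Dm * t) * H t) has_real_derivative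
          (C * (exp (- Dm * \<delta>) * (- Dm)) * H \<delta> + C * exp (- Dm * \<delta>) * Hd \<delta>)) (at \<delta>)"
        by (rule derivative_eq_intros Hderiv refl | simp)+
      have pos: "C * exp (- Dm * \<delta>) * H \<delta> > 0" using Cpos Hp by simp
      have "((\<lambda>t. ln (C * exp (- Dm * t) * H t)) has_real_derivative
          inverse (C * exp (- Dm * \<delta>) * H \<delta>) * (C * (exp (- Dm * \<delta>) * (- Dm)) * H \<delta> + C * exp (- Dm * \<delta>) * Hd \<delta>)) (at \<delta>)"
        by (rule DERIV_chain2[OF DERIV_ln[OF pos] dd])
      moreover have "inverse (C * exp (- Dm * \<delta>) * H \<delta>) * (C * (exp (- Dm * \<delta>) * (- Dm)) * H \<delta> + C * exp (- Dm * \<delta>) * Hd \<delta>) = g \<delta>"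
        unfolding g_def using Cpos Hp by (simp add: field_simps)
      ultimately show "((\<lambda>t. ln (smoothed_density \<phi> p x t)) has_real_derivative g \<delta>) (at \<delta>)"
        by (simp add: rho)
    qed
    have "(g \<longlongrightarrow> (q u0 * (d * I0)) / (q u0 * I0) - Dm) at_bot"
      unfolding g_def using qu0 I0pos by (intro tendsto_intros limA limB) simp
    moreover have "(q u0 * (d * I0)) / (q u0 * I0) - Dm = real DIM('b) - real DIM('a)"
      using qu0 I0pos unfolding d_def Dm_def by simp
    ultimately show "(g \<longlongrightarrow> real DIM('b) - real DIM('a)) at_bot" by simp
  qed
qed

end
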